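(* Let $\Gamma\in\mathcal S$ have $n$ vertices and let $\varphi$ be an embedding into $\mathbb Z^n$ such that exactly one index $t$ is of type (6), exactly one index is of type (5), and every other index is of type (4) or (7). Then $\Gamma\in\mathcal G$ (in particular $\Gamma$ is a linear chain), and the two vertices $v$ with nonzero coefficient at $E_t$ in $\varphi(v)$ are the two end vertices of the chain.
   Context: A plumbing tree is a finite tree $\Gamma$ each of whose vertices $v$ carries an integer decoration $d(v)$. $\Gamma$ is minimal if no vertex has decoration $-1$. For $n\ge 1$ let $(\mathbb Z^n,Q_n)$ be the lattice with basis $E_1,\dots,E_n$ and $Q_n(E_i,E_j)=-\delta_{ij}$, and let $K=\sum_{i=1}^n E_i$. A plumbing tree $\Gamma$ on $n$ vertices is a symplectic plumbing tree if there is a map $\varphi$ (an embedding) from its vertex set to $\mathbb Z^n$ such that: for distinct vertices $v_1,v_2$, $Q_n(\varphi(v_1),\varphi(v_2))$ is $1$ if they are adjacent and $0$ otherwise; $Q_n(\varphi(v),\varphi(v))=d(v)$ for every $v$; and $Q_n(\varphi(v),K)+Q_n(\varphi(v),\varphi(v))=-2$ for every $v$. $\mathcal S$ is the set of minimal, connected symplectic plumbing trees. Index types: write $\varphi(v)=\sum_i a_{v,i}E_i$; for an index $i$ consider the multiset of nonzero coefficients $a_{v,i}$ as $v$ ranges over all vertices. Index $i$ is of type (1) if this multiset is $\{1\}$, (2) if $\{-1\}$, (3) if $\{-2\}$, (4) if $\{1,-1\}$, (5) if $\{1,-2\}$, (6) if $\{-1,-1\}$, (7) if $\{1,-1,-1\}$,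 (9) if $\{1,-1,-1,-1\}$, and (10) if it is empty. (G) For coprime integers $p>q>0$ write $p^2/(pq-1)=a_1-\cfrac{1}{a_2-\cfrac{1}{\ddots-\cfrac{1}{a_k}}}$ with all $a_i\ge 2$ integers; $\Gamma_{p/q}$ is the linear chain with decorations $-a_1,\dots,-a_k$ in order, and $\mathcal G$ is the set of all $\Gamma_{p/q}$. *)

theory Defs
  imports Complex_Main "HOL-Library.Multiset"
begin

text \<open>A plumbing graph: finite vertex set V, symmetric irreflexive adjacency E on V,
  integer decoration d.  Vectors of Z^n are functions nat => int supported on {0..<n}.\<close>

definition graph :: "'v set \<Rightarrow> ('v \<Rightarrow> 'v \<Rightarrow> bool) \<Rightarrow> bool" where
  "graph V E \<longleftrightarrow> finite V \<and> (\<forall>u v. E u v \<longrightarrow> u \<in> V \<and> v \<in> V)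
      \<and> (\<forall>u v. E u v \<longrightarrow> E v u) \<and> (\<forall>v. \<not> E v v)"

definition connected_graph :: "'v set \<Rightarrow> ('v \<Rightarrow> 'v \<Rightarrow> bool) \<Rightarrow> bool" where
  "connected_graph V E \<longleftrightarrow> V \<noteq> {} \<and> (\<forall>u\<in>V. \<forall>v\<in>V. E\<^sup>*\<^sup>* u v)"

definition has_cycle :: "'v set \<Rightarrow> ('v \<Rightarrow> 'v \<Rightarrow> bool) \<Rightarrow> bool" where
  "has_cycle V E \<longleftrightarrow> (\<exists>cs. length cs \<ge> 3 \<and> distinct cs \<and> set cs \<subseteq> V
      \<and> (\<forall>i. Suc i < length cs \<longrightarrow> E (cs ! i) (cs ! Suc i)) \<and> E (last cs) (hd cs))"

definition is_tree :: "'v set \<Rightarrow> ('v \<Rightarrow> 'v \<Rightarrow> bool) \<Rightarrow> bool" where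
  "is_tree V E \<longleftrightarrow> graph V E \<and> connected_graph V E \<and> \<not> has_cycle V E"

definition minimal_plumbing :: "'v set \<Rightarrow> ('v \<Rightarrow> int) \<Rightarrow> bool" where
  "minimal_plumbing V d \<longleftrightarrow> (\<forall>v\<in>V. d v \<noteq> -1)"

definition Qn :: "nat \<Rightarrow> (nat \<Rightarrow> int) \<Rightarrow> (nat \<Rightarrow> int) \<Rightarrow> int" where
  "Qn n x y = - (\<Sum>i<n. x i * y i)"

definition Kn :: "nat \<Rightarrow> nat \<Rightarrow> int" where
  "Kn n = (\<lambda>i. if i < n then 1 else 0)"

definition symplectic_embedding ::
  "nat \<Rightarrow> 'v set \<Rightarrow> ('v \<Rightarrow> 'v \<Rightarrow> bool) \<Rightarrow> ('v \<Rightarrow> int) \<Rightarrow> ('v \<Rightarrow> nat \<Rightarrow> int) \<Rightarrow> bool" where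
  "symplectic_embedding n V E d \<phi> \<longleftrightarrow>
     (\<forall>v\<in>V. \<forall>i\<ge>n. \<phi> v i = 0)
   \<and> (\<forall>v1\<in>V. \<forall>v2\<in>V. v1 \<noteq> v2 \<longrightarrow> Qn n (\<phi> v1) (\<phi> v2) = (if E v1 v2 then 1 else 0))
   \<and> (\<forall>v\<in>V. Qn n (\<phi> v) (\<phi> v) = d v)
   \<and> (\<forall>v\<in>V. Qn n (\<phi> v) (Kn n) + Qn n (\<phi> v) (\<phi> v) = -2)"

definition coeffs_at :: "'v set \<Rightarrow> ('v \<Rightarrow> nat \<Rightarrow> int) \<Rightarrow> nat \<Rightarrow> int multiset" where
  "coeffs_at V \<phi> i = image_mset (\<lambda>v. \<phi> v i) (filter_mset (\<lambda>v. \<phi> v i \<noteq> 0) (mset_set V))"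

definition type4 where "type4 V \<phi> i \<longleftrightarrow> coeffs_at V \<phi> i = {#1, -1#}"
definition type5 where "type5 V \<phi> i \<longleftrightarrow> coeffs_at V \<phi> i = {#1, -2#}"
definition type6 where "type6 V \<phi> i \<longleftrightarrow> coeffs_at V \<phi> i = {#-1, -1#}"
definition type7 where "type7 V \<phi> i \<longleftrightarrow> coeffs_at V \<phi> i = {#1, -1, -1#}"

fun cf_val :: "int list \<Rightarrow> rat" where
  "cf_val [] = 0"
| "cf_val [a] = of_int a"
| "cf_val (a # as) = of_int a - 1 / cf_val as"

definition is_chain_with ::
  "'v set \<Rightarrow> ('v \<Rightarrow> 'v \<Rightarrow> bool) \<Rightarrow> ('v \<Rightarrow> int) \<Rightarrow> 'v list \<Rightarrow> int list \<Rightarrow> bool" where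
  "is_chain_with V E d vs as \<longleftrightarrow> distinct vs \<and> set vs = V \<and> length vs = length as
     \<and> (\<forall>i<length vs. \<forall>j<length vs. E (vs ! i) (vs ! j) \<longleftrightarrow> (i = Suc j \<or> j = Suc i))
     \<and> (\<forall>i<length vs. d (vs ! i) = - (as ! i))"

definition is_Gamma_pq ::
  "int \<Rightarrow> int \<Rightarrow> 'v set \<Rightarrow> ('v \<Rightarrow> 'v \<Rightarrow> bool) \<Rightarrow> ('v \<Rightarrow> int) \<Rightarrow> 'v list \<Rightarrow> bool" where
  "is_Gamma_pq p q V E d vs \<longleftrightarrow> (\<exists>as. as \<noteq> [] \<and> (\<forall>a\<in>set as. a \<ge> 2)
      \<and> cf_val as = of_int (p^2) / of_int (p*q - 1) \<and> is_chain_with V E d vs as)"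

definition in_G :: "'v set \<Rightarrow> ('v \<Rightarrow> 'v \<Rightarrow> bool) \<Rightarrow> ('v \<Rightarrow> int) \<Rightarrow> bool" where
  "in_G V E d \<longleftrightarrow> (\<exists>p q vs. 0 < q \<and> q < p \<and> coprime p q \<and> is_Gamma_pq p q V E d vs)"

end

theory Submission
  imports Defs
begin

type_synonym m4 = "int \<times> int \<times> int \<times> int"

fun mmul :: "m4 \<Rightarrow> m4 \<Rightarrow> m4" where
  "mmul (a,b,c,d) (e,f,g,h) = (a*e+b*g, a*f+b*h, c*e+d*g, c*f+d*h)"

fun mm :: "int list \<Rightarrow> m4" where
  "mm [] = (1,0,0,1)"
| "mm (a#as) = mmul (a,-1,1,0) (mm as)"

fun conjT :: "m4 \<Rightarrow> m4" where
  "conjT (a,b,c,d) = (a,-c,-b,d)"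

definition inv4 :: "int \<Rightarrow> int \<Rightarrow> m4" where
  "inv4 P Q = (P^2, -(P*(P-Q)-1), P*Q-1, -(Q*(P-Q)-1))"

lemma mmul_assoc: "mmul (mmul A B) C = mmul A (mmul B C)"
  by (cases A; cases B; cases C) (simp add: algebra_simps)

lemma mmul_id: "mmul (1,0,0,1) A = A" "mmul A (1,0,0,1) = A"
  by (cases A; simp)+

lemma mm_append: "mm (xs @ ys) = mmul (mm xs) (mm ys)"
  by (induction xs) (simp_all add: mmul_id mmul_assoc)

lemma mm_snoc_inc: "mm (xs @ [c+1]) = mmul (mm (xs @ [c])) (1,0,-1,1)"
  by (simp add: mm_append mmul_assoc mmul_id)

lemma conjT_mmul: "conjT (mmul A B) = mmul (conjT B) (conjT A)"
  by (cases A; cases B) (simp add: algebra_simps)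

lemma mm_rev: "mm (rev xs) = conjT (mm xs)"
proof (induction xs)
  case Nil then show ?case by simp
next
  case (Cons a xs)
  have "mm (rev (a#xs)) = mmul (mm (rev xs)) (mm [a])" by (simp add: mm_append)
  also have "\<dots> = mmul (conjT (mm xs)) (conjT (a,-1,1,0))" using Cons by (simp add: mmul_id)
  also have "\<dots> = conjT (mm (a#xs))" by (simp add: conjT_mmul)
  finally show ?case .
qed

lemma mm_cf:
  assumes "xs \<noteq> []" "\<forall>a\<in>set xs. a \<ge> 2"
  shows "fst (mm xs) > fst (snd (snd (mm xs))) \<and> fst (snd (snd (mm xs))) > 0
     \<and> cf_val xs = of_int (fst (mm xs)) / of_int (fst (snd (snd (mm xs))))"
  using assms
proof (induction xs rule: cf_val.induct)
  case 1 then show ?case by simp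
next
  case (2 a) then show ?case by (simp add: mmul_id)
next
  case (3 a b as)
  obtain X Z Y W where m: "mm (b#as) = (X,Z,Y,W)" by (cases "mm (b#as)") auto
  from 3 m have ih: "X > Y" "Y > 0" "cf_val (b#as) = of_int X / of_int Y" by auto
  have a2: "a \<ge> 2" using 3 by simp
  have e: "mm (a#b#as) = (a*X - Y, a*Z - W, X, Z)" using m by simp
  have "a*X \<ge> 2*X" using a2 ih by (intro mult_right_mono) auto
  then have "a*X - Y > X" using ih by linarith
  moreover have "cf_val (a#b#as) = of_int (a*X - Y) / of_int X"
  proof -
    have X0: "(of_int X :: rat) \<noteq> 0" using ih by simp
    have "cf_val (a#b#as) = of_int a - 1 / cf_val (b#as)" by simp
    also have "\<dots> = of_int a - of_int Y / of_int X" using ih(3) by simp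
    also have "\<dots> = (of_int a * of_int X - of_int Y) / of_int X" using X0 by (simp add: diff_divide_distrib)
    finally show ?thesis by simp
  qed
  ultimately show ?case using e ih by simp
qed

lemma move_R: "mmul (mmul (2,-1,1,0) (inv4 P Q)) (1,0,-1,1) = inv4 (2*P-Q) P"
  by (simp add: inv4_def algebra_simps power2_eq_square)

lemma conjT_inv4: "conjT (inv4 P Q) = inv4 P (P-Q)"
  by (simp add: inv4_def algebra_simps power2_eq_square)

lemma mm_base: "mm [2,5] = inv4 3 2"
  by (simp add: inv4_def)

lemma img_add:
  assumes "finite S" "image_mset g (mset_set S) = add_mset c M"
  shows "\<exists>x\<in>S. g x = c \<and> image_mset g (mset_set (S - {x})) = M"
proof -
  have "c \<in># image_mset g (mset_set S)" using assms(2) by simp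
  then obtain x where x: "x \<in> S" "g x = c" using assms(1) by (auto simp: in_image_mset)
  have "mset_set S = add_mset x (mset_set (S - {x}))"
    using assms(1) x(1) by (metis mset_set.remove)
  then have "image_mset g (mset_set S) = add_mset c (image_mset g (mset_set (S - {x})))"
    using x by simp
  then show ?thesis using assms(2) x by auto
qed

lemma img_empty:
  assumes "finite S" "image_mset g (mset_set S) = {#}"
  shows "S = {}"
  using assms by (simp add: mset_set_empty_iff)

lemma coeffs2:
  assumes "finite V" "coeffs_at V g i = {#a, b#}"
  shows "\<exists>x y. x \<in> V \<and> y \<in> V \<and> x \<noteq> y \<and> g x i = a \<and> g y i = b \<and> (\<forall>z\<in>V. z \<noteq> x \<longrightarrow> z \<noteq> y \<longrightarrow> g z i = 0)"
proof -
  let ?S = "{v\<in>V. g v i \<noteq> 0}"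
  have fS: "finite ?S" using assms(1) by simp
  have e: "image_mset (\<lambda>v. g v i) (mset_set ?S) = add_mset a (add_mset b {#})"
    using assms unfolding coeffs_at_def by simp
  obtain x where x: "x \<in> ?S" "g x i = a" and e2: "image_mset (\<lambda>v. g v i) (mset_set (?S - {x})) = add_mset b {#}"
    using img_add[OF fS e] by blast
  obtain y where y: "y \<in> ?S - {x}" "g y i = b" and e3: "image_mset (\<lambda>v. g v i) (mset_set (?S - {x} - {y})) = {#}"
    using img_add[OF _ e2] fS by blast
  have "?S - {x} - {y} = {}" using img_empty[OF _ e3] fS by blast
  then show ?thesis using x y by blast
qed

lemma coeffs3:
  assumes "finite V" "coeffs_at V g i = {#a, b, c#}"
  shows "\<exists>x y z. x \<in> V \<and> y \<in> V \<and> z \<in> V \<and> x \<noteq> y \<and> x \<noteq> z \<and> y \<noteq> z \<and> g x i = a \<and> g y i = b \<and> g z i = c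
     \<and> (\<forall>w\<in>V. w \<noteq> x \<longrightarrow> w \<noteq> y \<longrightarrow> w \<noteq> z \<longrightarrow> g w i = 0)"
proof -
  let ?S = "{v\<in>V. g v i \<noteq> 0}"
  have fS: "finite ?S" using assms(1) by simp
  have e: "image_mset (\<lambda>v. g v i) (mset_set ?S) = add_mset a (add_mset b (add_mset c {#}))"
    using assms unfolding coeffs_at_def by simp
  obtain x where x: "x \<in> ?S" "g x i = a" and e2: "image_mset (\<lambda>v. g v i) (mset_set (?S - {x})) = add_mset b (add_mset c {#})"
    using img_add[OF fS e] by blast
  obtain y where y: "y \<in> ?S - {x}" "g y i = b" and e3: "image_mset (\<lambda>v. g v i) (mset_set (?S - {x} - {y})) = add_mset c {#}"
    using img_add[OF _ e2] fS by blast
  obtain z where z: "z \<in> ?S - {x} - {y}" "g z i = c" and e4: "image_mset (\<lambda>v. g v i) (mset_set (?S - {x} - {y} - {z})) = {#}"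
    using img_add[OF _ e3] fS by blast
  have "?S - {x} - {y} - {z} = {}" using img_empty[OF _ e4] fS by blast
  then show ?thesis using x y z by blast
qed

definition dt :: "nat set \<Rightarrow> ('v \<Rightarrow> nat \<Rightarrow> int) \<Rightarrow> 'v \<Rightarrow> 'v \<Rightarrow> int" where
  "dt I g v w = (\<Sum>i\<in>I. g v i * g w i)"

definition T4 :: "'v set \<Rightarrow> ('v \<Rightarrow> nat \<Rightarrow> int) \<Rightarrow> nat \<Rightarrow> bool" where
  "T4 V g i \<longleftrightarrow> (\<exists>ow h. ow\<in>V \<and> h\<in>V \<and> g ow i = 1 \<and> g h i = -1 \<and> (\<forall>z\<in>V. z\<noteq>ow \<longrightarrow> z\<noteq>h \<longrightarrow> g z i = 0))"
definition T5 :: "'v set \<Rightarrow> ('v \<Rightarrow> nat \<Rightarrow> int) \<Rightarrow> nat \<Rightarrow> bool" where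
  "T5 V g i \<longleftrightarrow> (\<exists>p q. p\<in>V \<and> q\<in>V \<and> g p i = 1 \<and> g q i = -2 \<and> (\<forall>z\<in>V. z\<noteq>p \<longrightarrow> z\<noteq>q \<longrightarrow> g z i = 0))"
definition T6 :: "'v set \<Rightarrow> ('v \<Rightarrow> nat \<Rightarrow> int) \<Rightarrow> nat \<Rightarrow> bool" where
  "T6 V g i \<longleftrightarrow> (\<exists>w b. w\<in>V \<and> b\<in>V \<and> w\<noteq>b \<and> g w i = -1 \<and> g b i = -1 \<and> (\<forall>z\<in>V. z\<noteq>w \<longrightarrow> z\<noteq>b \<longrightarrow> g z i = 0))"
definition T7 :: "'v set \<Rightarrow> ('v \<Rightarrow> nat \<Rightarrow> int) \<Rightarrow> nat \<Rightarrow> bool" where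
  "T7 V g i \<longleftrightarrow> (\<exists>ow h1 h2. ow\<in>V \<and> h1\<in>V \<and> h2\<in>V \<and> h1\<noteq>h2 \<and> g ow i = 1 \<and> g h1 i = -1 \<and> g h2 i = -1
      \<and> (\<forall>z\<in>V. z\<noteq>ow \<longrightarrow> z\<noteq>h1 \<longrightarrow> z\<noteq>h2 \<longrightarrow> g z i = 0))"

lemma sum_two:
  assumes "finite I" "x\<in>I" "y\<in>I" "x\<noteq>y" "\<forall>i\<in>I. i\<noteq>x \<longrightarrow> i\<noteq>y \<longrightarrow> h i = 0"
  shows "sum h I = h x + h y"
proof -
  have "sum h I = sum h {x,y}"
    using assms by (intro sum.mono_neutral_right) auto
  then show ?thesis using assms by simp
qed

lemma sum_le_member:
  fixes f :: "'a \<Rightarrow> int"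
  assumes "finite A" "a\<in>A" "\<forall>x\<in>A. f x \<le> 0"
  shows "sum f A \<le> f a"
proof -
  have "sum f A = f a + sum f (A - {a})" using assms by (simp add: sum.remove)
  moreover have "sum f (A - {a}) \<le> 0" using assms by (intro sum_nonpos) auto
  ultimately show ?thesis by simp
qed

lemma rtranclp_cross:
  assumes "R\<^sup>*\<^sup>* x y" "x\<in>S" "y\<notin>S"
  shows "\<exists>v z. v\<in>S \<and> z\<notin>S \<and> R v z"
  using assms by (induction rule: rtranclp_induct) auto

locale cfgl =
  fixes V :: "'v set" and E :: "'v \<Rightarrow> 'v \<Rightarrow> bool" and I :: "nat set"
    and g :: "'v \<Rightarrow> nat \<Rightarrow> int" and u f :: nat
  assumes finV: "finite V" and finI: "finite I" and cardI: "card I = card V"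
    and out: "\<And>v i. v\<in>V \<Longrightarrow> i \<notin> I \<Longrightarrow> g v i = 0"
    and dtE: "\<And>v w. v\<in>V \<Longrightarrow> w\<in>V \<Longrightarrow> v \<noteq> w \<Longrightarrow> dt I g v w = (if E v w then -1 else 0)"
    and sum2: "\<And>v. v\<in>V \<Longrightarrow> (\<Sum>i\<in>I. g v i * (g v i + 1)) = 2"
    and nrm1: "\<And>v. v\<in>V \<Longrightarrow> dt I g v v \<noteq> 1"
    and Ein: "\<And>v w. E v w \<Longrightarrow> v\<in>V \<and> w\<in>V" and Eirr: "\<And>v. \<not> E v v"
    and conn: "\<And>x y. x\<in>V \<Longrightarrow> y\<in>V \<Longrightarrow> E\<^sup>*\<^sup>* x y"
    and uI: "u\<in>I" and fI: "f\<in>I" and uf: "u\<noteq>f"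
    and T6u: "T6 V g u" and T5f: "T5 V g f"
    and T47: "\<And>i. i\<in>I \<Longrightarrow> i\<noteq>u \<Longrightarrow> i\<noteq>f \<Longrightarrow> T4 V g i \<or> T7 V g i"
begin

lemma T47D:
  assumes "i\<in>I" "i\<noteq>u" "i\<noteq>f"
  shows "\<exists>ow\<in>V. g ow i = 1 \<and> (\<forall>z\<in>V. z\<noteq>ow \<longrightarrow> g z i = 0 \<or> g z i = -1) \<and> (\<exists>h\<in>V. g h i = -1)"
  using T47[OF assms] unfolding T4_def T7_def by (elim disjE exE) force+

lemma vals: "v\<in>V \<Longrightarrow> g v i = 0 \<or> g v i = 1 \<or> g v i = -1 \<or> g v i = -2"
proof -
  assume v: "v\<in>V"
  show ?thesis
  proof (cases "i\<in>I")
    case False then show ?thesis using out v by simp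
  next
    case True
    show ?thesis
    proof (cases "i = u")
      case True then show ?thesis using T6u v unfolding T6_def by metis
    next
      case nu: False
      show ?thesis
      proof (cases "i = f")
        case True then show ?thesis using T5f v unfolding T5_def by metis
      next
        case False then show ?thesis using T47D[OF \<open>i\<in>I\<close> nu False] v by metis
      qed
    qed
  qed
qed

lemma neg2: "v\<in>V \<Longrightarrow> g v i = -2 \<Longrightarrow> i = f"
proof (rule ccontr)
  assume v: "v\<in>V" and e: "g v i = -2" and n: "i\<noteq>f"
  have iI: "i\<in>I" using out v e by force
  show False
  proof (cases "i = u")
    case True then show False using T6u v e unfolding T6_def by force
  next
    case False then show False using T47D[OF iI False n] v e by force
  qed
qed

lemma u_vals: "v\<in>V \<Longrightarrow> g v u = 0 \<or> g v u = -1"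
  using T6u unfolding T6_def by metis

lemma f_vals: "v\<in>V \<Longrightarrow> g v f = 0 \<or> g v f = 1 \<or> g v f = -2"
  using T5f unfolding T5_def by metis

lemma special:
  assumes v: "v\<in>V"
  shows "\<exists>s. (g v s = 1 \<or> g v s = -2) \<and> (\<forall>i. i\<noteq>s \<longrightarrow> g v i = 0 \<or> g v i = -1)"
proof -
  let ?P = "\<lambda>i. g v i = 1 \<or> g v i = -2"
  let ?Sp = "{i\<in>I. ?P i}"
  have t: "\<And>i. g v i * (g v i + 1) = (if ?P i then 2 else 0)"
  proof -
    fix i
    from vals[OF v, of i] show "g v i * (g v i + 1) = (if ?P i then 2 else 0)" by (elim disjE) simp_all
  qed
  have "2 = (\<Sum>i\<in>I. if ?P i then 2 else (0::int))"
    using sum2[OF v] t by simp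
  also have "\<dots> = (\<Sum>i\<in>?Sp. 2)" by (rule sum.inter_filter[OF finI, symmetric])
  also have "\<dots> = 2 * int (card ?Sp)" by simp
  finally have "card ?Sp = 1" by simp
  then obtain s where s: "?Sp = {s}" by (auto simp: card_Suc_eq)
  have "?P s" using s by auto
  moreover have "\<forall>i. i\<noteq>s \<longrightarrow> g v i = 0 \<or> g v i = -1"
  proof (intro allI impI)
    fix i assume "i\<noteq>s"
    show "g v i = 0 \<or> g v i = -1"
    proof (cases "i\<in>I")
      case True then have "\<not> ?P i" using s \<open>i\<noteq>s\<close> by auto
      then show ?thesis using vals[OF v, of i] by auto
    next
      case False then show ?thesis using out v by simp
    qed
  qed
  ultimately show ?thesis by blast
qed

lemma special_unique:
  assumes "v\<in>V" "g v s = 1 \<or> g v s = -2" "g v s' = 1 \<or> g v s' = -2"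
  shows "s = s'"
proof -
  obtain s0 where h: "\<forall>i. i\<noteq>s0 \<longrightarrow> g v i = 0 \<or> g v i = -1"
    using special[OF assms(1)] by blast
  have "s = s0" using h assms(2) by force
  moreover have "s' = s0" using h assms(3) by force
  ultimately show ?thesis by simp
qed

lemma dt_sym: "dt I g v w = dt I g w v"
  unfolding dt_def by (simp add: mult.commute)

lemma E_sym: "E v w \<Longrightarrow> E w v"
proof -
  assume e: "E v w"
  then have "v\<in>V" "w\<in>V" "v\<noteq>w" using Ein Eirr by auto
  then show "E w v" using dtE[of v w] dtE[of w v] dt_sym[of v w] e by (auto split: if_splits)
qed

lemma card_ge2: "card V \<ge> 2"
proof -
  have "card {u,f} \<le> card I" using uI fI finI by (intro card_mono) auto
  then show ?thesis using uf cardI by simp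
qed

end

context cfgl begin

lemma sink:
  assumes c3: "card V \<ge> 3"
  shows "\<exists>w\<in>V. g w f = 0 \<and> (\<forall>i. g w i = -1 \<longrightarrow> i = u)"
proof (rule ccontr)
  assume "\<not> ?thesis"
  then have H: "\<And>w. w\<in>V \<Longrightarrow> g w f = 0 \<Longrightarrow> \<exists>i. g w i = -1 \<and> i \<noteq> u" by blast
  obtain p q where pq: "p\<in>V" "q\<in>V" "g p f = 1" "g q f = -2" "\<forall>z\<in>V. z\<noteq>p \<longrightarrow> z\<noteq>q \<longrightarrow> g z f = 0"
    using T5f unfolding T5_def by blast
  define C where "C = {w\<in>V. g w f = 0}"
  define cl where "cl S \<longleftrightarrow> S \<subseteq> C \<and> S \<noteq> {} \<and> (\<forall>v\<in>S. \<forall>i. i\<noteq>u \<longrightarrow> g v i = -1 \<longrightarrow> (\<forall>z\<in>V. g z i = 1 \<longrightarrow> z\<in>S))" for S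
  have owner: "\<exists>ow\<in>C. g ow i = 1 \<and> (\<forall>z\<in>V. z\<noteq>ow \<longrightarrow> g z i = 0 \<or> g z i = -1)"
    if vC: "v\<in>C" and iu: "i\<noteq>u" and gvi: "g v i = -1" for v i
  proof -
    have vV: "v\<in>V" "g v f = 0" using vC C_def by auto
    have iI: "i\<in>I" using out vV gvi by force
    have nf: "i\<noteq>f" using vV gvi by auto
    obtain ow where ow: "ow\<in>V" "g ow i = 1" "\<forall>z\<in>V. z\<noteq>ow \<longrightarrow> g z i = 0 \<or> g z i = -1"
      using T47D[OF iI iu nf] by blast
    have "g ow f = 0"
    proof (rule ccontr)
      assume "g ow f \<noteq> 0"
      then have "g ow f = 1 \<or> g ow f = -2" using f_vals[OF ow(1)] by auto
      then have "f = i" using special_unique[OF ow(1)] ow(2) by blast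
      then show False using nf by simp
    qed
    then show ?thesis using ow C_def by auto
  qed
  have CV: "C \<subseteq> V" using C_def by auto
  have Cne: "C \<noteq> {}"
  proof
    assume "C = {}"
    then have "V \<subseteq> {p,q}" using pq C_def by auto
    then have "card V \<le> card {p,q}" by (intro card_mono) auto
    also have "\<dots> \<le> 2" by (cases "p=q") auto
    finally show False using c3 by simp
  qed
  have "cl C"
    unfolding cl_def
  proof (intro conjI ballI allI impI)
    fix v i z assume "v\<in>C" "i\<noteq>u" "g v i = -1" "z\<in>V" "g z i = 1"
    then obtain ow where "ow\<in>C" "g ow i = 1" "\<forall>z\<in>V. z\<noteq>ow \<longrightarrow> g z i = 0 \<or> g z i = -1"
      using owner by blast
    then show "z\<in>C" using \<open>z\<in>V\<close> \<open>g z i = 1\<close> by force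
  qed (use Cne in auto)
  then obtain S where clS: "cl S" and minS: "\<And>S'. cl S' \<Longrightarrow> card S \<le> card S'"
    using ex_has_least_nat[of cl C card] by blast
  have SC: "S \<subseteq> C" and Sne: "S \<noteq> {}"
    and Scl: "\<And>v i z. v\<in>S \<Longrightarrow> i\<noteq>u \<Longrightarrow> g v i = -1 \<Longrightarrow> z\<in>V \<Longrightarrow> g z i = 1 \<Longrightarrow> z\<in>S"
    using clS unfolding cl_def by blast+
  have SV: "S \<subseteq> V" using SC CV by auto
  have finS: "finite S" using SV finV finite_subset by blast
  have K: "\<exists>v\<in>S. \<exists>i. i\<noteq>u \<and> g v i = -1 \<and> g z i = 1" if zS: "z\<in>S" for z
  proof (rule ccontr)
    assume nK: "\<not> ?thesis"
    have "cl (S - {z})"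
      unfolding cl_def
    proof (intro conjI ballI allI impI)
      show "S - {z} \<subseteq> C" using SC by auto
    next
      have zC: "z\<in>C" using zS SC by auto
      then obtain i where i: "g z i = -1" "i\<noteq>u" using H C_def by auto
      then obtain ow where ow: "ow\<in>C" "g ow i = 1" using owner[OF zC] by blast
      have "ow\<in>S" using Scl[OF zS i(2) i(1)] ow CV by auto
      moreover have "ow \<noteq> z" using ow i by auto
      ultimately show "S - {z} \<noteq> {}" by auto
    next
      fix v i z' assume "v \<in> S - {z}" "i\<noteq>u" "g v i = -1" "z'\<in>V" "g z' i = 1"
      then show "z' \<in> S - {z}" using Scl nK by blast
    qed
    then have "card S \<le> card (S - {z})" using minS by blast
    moreover have "card (S - {z}) < card S" using finS zS by (rule card_Diff1_less)
    ultimately show False by simp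
  qed
  define \<alpha> where "\<alpha> i = (\<Sum>v\<in>S. g v i)" for i
  define \<beta> where "\<beta> i = (\<Sum>z\<in>V-S. g z i)" for i
  have cross: "(\<Sum>v\<in>S. \<Sum>z\<in>V-S. dt I g v z) = (\<Sum>i\<in>I. \<alpha> i * \<beta> i)"
  proof -
    have "(\<Sum>i\<in>I. \<alpha> i * \<beta> i) = (\<Sum>i\<in>I. \<Sum>v\<in>S. \<Sum>z\<in>V-S. g v i * g z i)"
      unfolding \<alpha>_def \<beta>_def by (simp add: sum_product)
    also have "\<dots> = (\<Sum>v\<in>S. \<Sum>i\<in>I. \<Sum>z\<in>V-S. g v i * g z i)" by (rule sum.swap)
    also have "\<dots> = (\<Sum>v\<in>S. \<Sum>z\<in>V-S. \<Sum>i\<in>I. g v i * g z i)"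
      by (rule sum.cong[OF refl], rule sum.swap)
    finally show ?thesis unfolding dt_def by simp
  qed
  have nonneg: "\<alpha> i * \<beta> i \<ge> 0" if iI: "i\<in>I" for i
  proof -
    consider "i = f" | "i = u" | "i\<noteq>u" "i\<noteq>f" by blast
    then show ?thesis
    proof cases
      case 1
      have "\<alpha> i = 0" unfolding \<alpha>_def using SC C_def 1 by (intro sum.neutral) auto
      then show ?thesis by simp
    next
      case 2
      have "\<alpha> i \<le> 0" unfolding \<alpha>_def using SV u_vals 2 by (intro sum_nonpos) force
      moreover have "\<beta> i \<le> 0" unfolding \<beta>_def using u_vals 2 by (intro sum_nonpos) force
      ultimately show ?thesis by (simp add: mult_nonpos_nonpos)
    next
      case 3
      obtain ow where ow: "ow\<in>V" "g ow i = 1" "\<forall>z\<in>V. z\<noteq>ow \<longrightarrow> g z i = 0 \<or> g z i = -1"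
        using T47D[OF iI 3] by blast
      show ?thesis
      proof (cases "ow\<in>S")
        case True
        obtain v i' where v: "v\<in>S" "i'\<noteq>u" "g v i' = -1" "g ow i' = 1" using K[OF True] by blast
        have "i' = i" using special_unique[OF ow(1)] v(4) ow(2) by blast
        with v have gv: "g v i = -1" by simp
        have vo: "v \<noteq> ow" using gv ow by auto
        have "\<alpha> i = g ow i + (\<Sum>z\<in>S-{ow}. g z i)" unfolding \<alpha>_def using finS True by (simp add: sum.remove)
        moreover have "(\<Sum>z\<in>S-{ow}. g z i) \<le> g v i"
          using finS v(1) vo ow(3) SV by (intro sum_le_member) force+
        ultimately have "\<alpha> i \<le> 0" using gv ow by simp
        moreover have "\<beta> i \<le> 0" unfolding \<beta>_def using ow(3) True by (intro sum_nonpos) force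
        ultimately show ?thesis by (simp add: mult_nonpos_nonpos)
      next
        case False
        have "\<alpha> i = 0" unfolding \<alpha>_def
        proof (intro sum.neutral ballI)
          fix v assume v: "v\<in>S"
          have "v \<noteq> ow" using v False by auto
          then have "g v i = 0 \<or> g v i = -1" using ow(3) v SV by auto
          moreover have "g v i \<noteq> -1" using Scl[OF v 3(1) _ ow(1) ow(2)] False by auto
          ultimately show "g v i = 0" by simp
        qed
        then show ?thesis by simp
      qed
    qed
  qed
  have R: "(\<Sum>i\<in>I. \<alpha> i * \<beta> i) \<ge> 0" using nonneg by (intro sum_nonneg) auto
  obtain x where xS: "x\<in>S" using Sne by auto
  have pS: "p \<notin> S" using SC C_def pq by auto
  obtain v z where vz: "v\<in>S" "z\<notin>S" "E v z" using rtranclp_cross[OF conn[OF _ pq(1)] xS pS] xS SV by blast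
  have zV: "z\<in>V" using Ein vz by auto
  have terms: "dt I g v' z' \<le> 0" if "v'\<in>S" "z'\<in>V-S" for v' z'
  proof -
    have "v'\<in>V" "v'\<noteq>z'" "z'\<in>V" using that SV by auto
    then have "dt I g v' z' = (if E v' z' then - 1 else 0)" using dtE by blast
    then show ?thesis by simp
  qed
  have "(\<Sum>v\<in>S. \<Sum>z\<in>V-S. dt I g v z) \<le> (\<Sum>z\<in>V-S. dt I g v z)"
    using finS vz(1) terms finV by (intro sum_le_member) (auto intro: sum_nonpos)
  also have "\<dots> \<le> dt I g v z"
    using finV vz zV terms by (intro sum_le_member) auto
  also have "\<dots> = -1" using dtE[of v z] vz zV SV by auto
  finally show False using cross R by simp
qed

end

context cfgl begin

lemma dt_two:
  assumes "w\<in>V" "x\<in>I" "x\<noteq>u" "\<forall>i. i\<noteq>x \<longrightarrow> i\<noteq>u \<longrightarrow> g w i = 0"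
  shows "dt I g w z = g w x * g z x + g w u * g z u"
  unfolding dt_def using assms finI uI by (intro sum_two) auto

lemma leaf:
  assumes c3: "card V \<ge> 3"
  shows "\<exists>w x a b. w\<in>V \<and> a\<in>V \<and> b\<in>V \<and> x\<in>I \<and> x\<noteq>u \<and> x\<noteq>f \<and> w\<noteq>a \<and> w\<noteq>b \<and> a\<noteq>b
    \<and> g w x = 1 \<and> g w u = -1 \<and> g w f = 0 \<and> (\<forall>i. i\<noteq>x \<longrightarrow> i\<noteq>u \<longrightarrow> g w i = 0)
    \<and> g b u = -1 \<and> (\<forall>z\<in>V. z\<noteq>w \<longrightarrow> z\<noteq>b \<longrightarrow> g z u = 0)
    \<and> g a x = -1 \<and> g b x = -1 \<and> (\<forall>z\<in>V. z\<noteq>w \<longrightarrow> z\<noteq>a \<longrightarrow> z\<noteq>b \<longrightarrow> g z x = 0)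
    \<and> (\<forall>z. E w z \<longleftrightarrow> z = a)"
proof -
  obtain w where w: "w\<in>V" "g w f = 0" "\<forall>i. g w i = -1 \<longrightarrow> i = u" using sink[OF c3] by blast
  obtain x where x: "g w x = 1 \<or> g w x = -2" "\<forall>i. i\<noteq>x \<longrightarrow> g w i = 0 \<or> g w i = -1"
    using special[OF w(1)] by blast
  have wx: "g w x = 1" using x(1) neg2[OF w(1)] w(2) by force
  have xI: "x\<in>I" using out w(1) wx by force
  have xu: "x\<noteq>u" using u_vals[OF w(1)] wx by auto
  have xf: "x\<noteq>f" using w(2) wx by auto
  have w0: "\<forall>i. i\<noteq>x \<longrightarrow> i\<noteq>u \<longrightarrow> g w i = 0" using x(2) w(3) by blast
  have wu: "g w u = -1"
  proof (rule ccontr)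
    assume "g w u \<noteq> -1"
    then have "g w u = 0" using u_vals[OF w(1)] by auto
    then have "dt I g w w = 1" using dt_two[OF w(1) xI xu w0, of w] wx by simp
    then show False using nrm1 w(1) by simp
  qed
  have dtw': "\<And>z. dt I g w z = g z x - g z u"
    using dt_two[OF w(1) xI xu w0] wx wu by simp
  obtain w0' b0 where T6: "w0'\<in>V" "b0\<in>V" "w0'\<noteq>b0" "g w0' u = -1" "g b0 u = -1" "\<forall>z\<in>V. z\<noteq>w0' \<longrightarrow> z\<noteq>b0 \<longrightarrow> g z u = 0"
    using T6u unfolding T6_def by blast
  obtain b where b: "b\<in>V" "b\<noteq>w" "g b u = -1" "\<forall>z\<in>V. z\<noteq>w \<longrightarrow> z\<noteq>b \<longrightarrow> g z u = 0"
  proof (cases "w = w0'")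
    case True
    show ?thesis by (rule that[of b0]) (use T6 True in auto)
  next
    case False
    have "w = b0"
    proof (rule ccontr)
      assume "w \<noteq> b0"
      then have "g w u = 0" using T6(6) w(1) False by auto
      then show False using wu by simp
    qed
    show ?thesis by (rule that[of w0']) (use T6 \<open>w = b0\<close> in auto)
  qed
  obtain ow where ow: "ow\<in>V" "g ow x = 1" "\<forall>z\<in>V. z\<noteq>ow \<longrightarrow> g z x = 0 \<or> g z x = -1"
    using T47D[OF xI xu xf] by blast
  have owi: "ow = w"
  proof (rule ccontr)
    assume "ow \<noteq> w"
    then have "g w x = 0 \<or> g w x = -1" using ow(3) w(1) by auto
    then show False using wx by simp
  qed
  have bx: "g b x = -1"
  proof -
    have "dt I g w b = g b x + 1" using dtw' b by simp
    moreover have "dt I g w b = 0 \<or> dt I g w b = -1" using dtE[OF w(1) b(1)] b(2) by auto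
    moreover have "g b x = 0 \<or> g b x = -1" using ow(3) owi b by auto
    ultimately show ?thesis by auto
  qed
  have nEwb: "\<not> E w b" using dtE[OF w(1) b(1)] b(2) dtw' bx b(3) by auto
  have "T4 V g x \<or> T7 V g x" using T47[OF xI xu xf] .
  then obtain a where a: "a\<in>V" "a\<noteq>w" "a\<noteq>b" "g a x = -1" "\<forall>z\<in>V. z\<noteq>w \<longrightarrow> z\<noteq>a \<longrightarrow> z\<noteq>b \<longrightarrow> g z x = 0"
  proof
    assume "T4 V g x"
    then obtain o1 h where h: "o1\<in>V" "h\<in>V" "g o1 x = 1" "g h x = -1" "\<forall>z\<in>V. z\<noteq>o1 \<longrightarrow> z\<noteq>h \<longrightarrow> g z x = 0"
      unfolding T4_def by blast
    have "o1 = w"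
    proof (rule ccontr)
      assume "o1 \<noteq> w"
      then have "w = h \<or> g w x = 0" using h(5) w(1) by auto
      then show False using wx h(4) by auto
    qed
    have "h = b"
    proof (rule ccontr)
      assume "h \<noteq> b"
      then have "g b x = 0" using h(5) b(1) b(2) \<open>o1 = w\<close> by auto
      then show False using bx by simp
    qed
    have iso: "\<not> E w z" for z
    proof
      assume e: "E w z"
      then have zV: "z\<in>V" "z\<noteq>w" using Ein Eirr by auto
      show False
      proof (cases "z = b")
        case True then show False using nEwb e by simp
      next
        case False
        then have "g z x = 0" "g z u = 0" using h(5) \<open>o1 = w\<close> \<open>h = b\<close> zV b(4) by auto
        then have "dt I g w z = 0" using dtw' by simp
        then show False using dtE[OF w(1) zV(1)] zV e by simp
      qed
    qed
    have "E\<^sup>*\<^sup>* w b" using conn w(1) b(1) by blast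
    then obtain z where "E w z" using b(2) by (cases rule: converse_rtranclpE) auto
    then show ?thesis using iso by blast
  next
    assume "T7 V g x"
    then obtain o1 h1 h2 where h: "o1\<in>V" "h1\<in>V" "h2\<in>V" "h1\<noteq>h2" "g o1 x = 1" "g h1 x = -1" "g h2 x = -1"
      "\<forall>z\<in>V. z\<noteq>o1 \<longrightarrow> z\<noteq>h1 \<longrightarrow> z\<noteq>h2 \<longrightarrow> g z x = 0"
      unfolding T7_def by blast
    have "o1 = w"
    proof (rule ccontr)
      assume "o1 \<noteq> w"
      then have "w = h1 \<or> w = h2 \<or> g w x = 0" using h(8) w(1) by auto
      then show False using wx h(6,7) by auto
    qed
    have "b = h1 \<or> b = h2"
    proof (rule ccontr)
      assume "\<not> (b = h1 \<or> b = h2)"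
      then have "g b x = 0" using h(8) b(1) b(2) \<open>o1 = w\<close> by auto
      then show False using bx by simp
    qed
    then show ?thesis
    proof
      assume "b = h1"
      show ?thesis
      proof (rule that[of h2])
        show "\<forall>z\<in>V. z\<noteq>w \<longrightarrow> z\<noteq>h2 \<longrightarrow> z\<noteq>b \<longrightarrow> g z x = 0" using h(8) \<open>o1 = w\<close> \<open>b = h1\<close> by blast
      qed (use h \<open>o1 = w\<close> \<open>b = h1\<close> wx in auto)
    next
      assume "b = h2"
      show ?thesis
      proof (rule that[of h1])
        show "\<forall>z\<in>V. z\<noteq>w \<longrightarrow> z\<noteq>h1 \<longrightarrow> z\<noteq>b \<longrightarrow> g z x = 0" using h(8) \<open>o1 = w\<close> \<open>b = h2\<close> by blast
      qed (use h \<open>o1 = w\<close> \<open>b = h2\<close> wx in auto)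
    qed
  qed
  have au: "g a u = 0" using b(4) a by auto
  have Ew: "E w z \<longleftrightarrow> z = a" for z
  proof
    assume e: "E w z"
    then have zV: "z\<in>V" "z\<noteq>w" using Ein Eirr by auto
    show "z = a"
    proof (rule ccontr)
      assume za: "z \<noteq> a"
      show False
      proof (cases "z = b")
        case True then show False using nEwb e by simp
      next
        case False
        then have "g z x = 0" "g z u = 0" using a(5) za zV b(4) by auto
        then have "dt I g w z = 0" using dtw' by simp
        then show False using dtE[OF w(1) zV(1)] zV e by simp
      qed
    qed
  next
    assume "z = a"
    then have "dt I g w z = -1" using dtw' a(4) au by simp
    then show "E w z" using dtE[OF w(1) a(1)] a(2) \<open>z = a\<close> by (auto split: if_splits)
  qed
  have wa: "w \<noteq> a" using a(2) by auto
  have wb: "w \<noteq> b" using b(2) by auto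
  have Ew': "\<forall>z. E w z \<longleftrightarrow> z = a" using Ew by blast
  show ?thesis
    apply (rule exI[of _ w], rule exI[of _ x], rule exI[of _ a], rule exI[of _ b])
    using w(1) a(1) b(1) xI xu xf wa wb a(3) wx wu w(2) w0 b(3) b(4) a(4) bx a(5) Ew'
    by blast
qed

end

lemma leaf_conn:
  assumes "R\<^sup>*\<^sup>* x y" "x \<noteq> w" "\<And>z. R w z \<longleftrightarrow> z = a" "\<And>z. R z w \<longleftrightarrow> z = a" "a \<noteq> w"
  shows "(\<lambda>v z. R v z \<and> v \<noteq> w \<and> z \<noteq> w)\<^sup>*\<^sup>* x (if y = w then a else y)"
  using assms(1)
proof (induction rule: rtranclp_induct)
  case base then show ?case using assms(2) by simp
next
  case (step y z)
  show ?case
  proof (cases "z = w")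
    case True
    then have "y = a" using step(2) assms(4) by simp
    then show ?thesis using step(3) True assms(5) by simp
  next
    case zw: False
    show ?thesis
    proof (cases "y = w")
      case True
      then have "z = a" using step(2) assms(3) by simp
      then show ?thesis using step(3) True zw by simp
    next
      case False
      then have "(\<lambda>v z. R v z \<and> v \<noteq> w \<and> z \<noteq> w)\<^sup>*\<^sup>* x y" using step(3) by simp
      then show ?thesis using step(2) False zw by (simp add: rtranclp.rtrancl_into_rtrancl)
    qed
  qed
qed

context cfgl begin

lemma dt_red:
  "dt (I - {u}) (\<lambda>v i. if i = u then 0 else g v i) v z = dt I g v z - g v u * g z u"
proof -
  have "dt (I - {u}) (\<lambda>v i. if i = u then 0 else g v i) v z = (\<Sum>i\<in>I-{u}. g v i * g z i)"
    unfolding dt_def by (rule sum.cong) auto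
  also have "\<dots> = dt I g v z - g v u * g z u" unfolding dt_def using finI uI by (simp add: sum_diff1)
  finally show ?thesis .
qed

lemma reduce:
  assumes L: "w\<in>V" "a\<in>V" "b\<in>V" "x\<in>I" "x\<noteq>u" "x\<noteq>f" "w\<noteq>a" "w\<noteq>b" "a\<noteq>b"
    "g w x = 1" "g w u = -1" "g w f = 0" "\<forall>i. i\<noteq>x \<longrightarrow> i\<noteq>u \<longrightarrow> g w i = 0"
    "g b u = -1" "\<forall>z\<in>V. z\<noteq>w \<longrightarrow> z\<noteq>b \<longrightarrow> g z u = 0"
    "g a x = -1" "g b x = -1" "\<forall>z\<in>V. z\<noteq>w \<longrightarrow> z\<noteq>a \<longrightarrow> z\<noteq>b \<longrightarrow> g z x = 0"
    "\<forall>z. E w z \<longleftrightarrow> z = a"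
  shows "cfgl (V - {w}) (\<lambda>v z. E v z \<and> v \<noteq> w \<and> z \<noteq> w) (I - {u}) (\<lambda>v i. if i = u then 0 else g v i) x f"
proof -
  let ?g = "\<lambda>v i. if i = u then 0 else g v i"
  let ?E = "\<lambda>v z. E v z \<and> v \<noteq> w \<and> z \<noteq> w"
  have Ew2: "\<And>z. E z w \<longleftrightarrow> z = a" using L(19) E_sym by blast
  show ?thesis
  proof (unfold_locales)
    show "finite (V - {w})" using finV by simp
    show "finite (I - {u})" using finI by simp
    show "card (I - {u}) = card (V - {w})" using cardI finI finV uI L(1) by simp
    show "\<And>v i. v \<in> V - {w} \<Longrightarrow> i \<notin> I - {u} \<Longrightarrow> ?g v i = 0" using out by auto
    show "dt (I - {u}) ?g v z = (if ?E v z then -1 else 0)" if "v \<in> V - {w}" "z \<in> V - {w}" "v \<noteq> z" for v z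
    proof -
      have "g v u * g z u = 0"
      proof (cases "v = b")
        case True then have "g z u = 0" using L(15) that by auto
        then show ?thesis by simp
      next
        case False then have "g v u = 0" using L(15) that by auto
        then show ?thesis by simp
      qed
      then show ?thesis using dt_red[of v z] dtE[of v z] that by auto
    qed
    show "(\<Sum>i\<in>I - {u}. ?g v i * (?g v i + 1)) = 2" if "v \<in> V - {w}" for v
    proof -
      have "(\<Sum>i\<in>I - {u}. ?g v i * (?g v i + 1)) = (\<Sum>i\<in>I - {u}. g v i * (g v i + 1))"
        by (rule sum.cong) auto
      also have "\<dots> = (\<Sum>i\<in>I. g v i * (g v i + 1)) - g v u * (g v u + 1)"
        using finI uI by (simp add: sum_diff1)
      also have "g v u * (g v u + 1) = 0" using u_vals[of v] that by auto
      finally show ?thesis using sum2[of v] that by simp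
    qed
    show "dt (I - {u}) ?g v v \<noteq> 1" if "v \<in> V - {w}" for v
    proof (cases "v = b")
      case False
      then have "g v u = 0" using L(15) that by auto
      then show ?thesis using dt_red[of v v] nrm1[of v] that by simp
    next
      case True
      obtain s where s: "g b s = 1 \<or> g b s = -2" using special[OF L(3)] by blast
      have sx: "s \<noteq> x" using s L(17) by auto
      have su: "s \<noteq> u" using s L(14) by auto
      have sI: "s \<in> I" using out[OF L(3)] s by force
      have "(\<Sum>i\<in>{s,x}. ?g b i * ?g b i) \<le> (\<Sum>i\<in>I - {u}. ?g b i * ?g b i)"
        using finI sI su L(4) L(5) by (intro sum_mono2) auto
      moreover have "(\<Sum>i\<in>{s,x}. ?g b i * ?g b i) = g b s * g b s + 1"
        using sx su L(5) L(17) by simp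
      moreover have "g b s * g b s \<ge> 1" using s by auto
      ultimately have "dt (I - {u}) ?g b b \<ge> 2" unfolding dt_def by simp
      then show ?thesis using True by simp
    qed
    show "\<And>v z. ?E v z \<Longrightarrow> v \<in> V - {w} \<and> z \<in> V - {w}" using Ein by auto
    show "\<And>v. \<not> ?E v v" using Eirr by auto
    show "?E\<^sup>*\<^sup>* y z" if "y \<in> V - {w}" "z \<in> V - {w}" for y z
      using leaf_conn[of E y z w a, OF conn[of y z]] that L(7) L(19) Ew2 by auto
    show "x \<in> I - {u}" using L by simp
    show "f \<in> I - {u}" using fI uf by simp
    show "x \<noteq> f" using L by simp
    show "T6 (V - {w}) ?g x"
      unfolding T6_def
      apply (rule exI[of _ a], rule exI[of _ b])
      using L by auto
    show "T5 (V - {w}) ?g f"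
    proof -
      obtain p q where pq: "p\<in>V" "q\<in>V" "g p f = 1" "g q f = -2" "\<forall>z\<in>V. z\<noteq>p \<longrightarrow> z\<noteq>q \<longrightarrow> g z f = 0"
        using T5f unfolding T5_def by blast
      have pw: "p \<noteq> w" "q \<noteq> w" using pq L(12) by auto
      show ?thesis unfolding T5_def
        apply (rule exI[of _ p], rule exI[of _ q])
        using pq pw uf[symmetric] by auto
    qed
    show "T4 (V - {w}) ?g i \<or> T7 (V - {w}) ?g i" if "i \<in> I - {u}" "i \<noteq> x" "i \<noteq> f" for i
    proof -
      have iu: "i \<noteq> u" using that by simp
      have gw: "g w i = 0" using L(13) that by auto
      have "T4 V g i \<or> T7 V g i" using T47[of i] that by auto
      then show ?thesis
      proof
        assume "T4 V g i"
        then obtain o1 h where h: "o1\<in>V" "h\<in>V" "g o1 i = 1" "g h i = -1" "\<forall>z\<in>V. z\<noteq>o1 \<longrightarrow> z\<noteq>h \<longrightarrow> g z i = 0"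
          unfolding T4_def by blast
        have ow: "o1 \<noteq> w" "h \<noteq> w" using h gw by auto
        have "T4 (V - {w}) ?g i" unfolding T4_def
          apply (rule exI[of _ o1], rule exI[of _ h])
          using h iu ow by auto
        then show ?thesis by simp
      next
        assume "T7 V g i"
        then obtain o1 h1 h2 where h: "o1\<in>V" "h1\<in>V" "h2\<in>V" "h1\<noteq>h2" "g o1 i = 1" "g h1 i = -1" "g h2 i = -1"
          "\<forall>z\<in>V. z\<noteq>o1 \<longrightarrow> z\<noteq>h1 \<longrightarrow> z\<noteq>h2 \<longrightarrow> g z i = 0"
          unfolding T7_def by blast
        have ow: "o1 \<noteq> w" "h1 \<noteq> w" "h2 \<noteq> w" using h gw by auto
        have "T7 (V - {w}) ?g i" unfolding T7_def
          apply (rule exI[of _ o1], rule exI[of _ h1], rule exI[of _ h2])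
          using h iu ow by auto
        then show ?thesis by simp
      qed
    qed
  qed
qed

end

definition chain :: "('v \<Rightarrow> 'v \<Rightarrow> bool) \<Rightarrow> 'v list \<Rightarrow> bool" where
  "chain R vs \<longleftrightarrow> (\<forall>i<length vs. \<forall>j<length vs. R (vs!i) (vs!j) \<longleftrightarrow> (i = Suc j \<or> j = Suc i))"

lemma chain_rev:
  assumes "chain R vs" shows "chain R (rev vs)"
  unfolding chain_def
proof (intro allI impI)
  fix i j assume ij: "i < length (rev vs)" "j < length (rev vs)"
  let ?L = "length vs"
  have "R (vs ! (?L - Suc i)) (vs ! (?L - Suc j)) \<longleftrightarrow> (?L - Suc i = Suc (?L - Suc j) \<or> ?L - Suc j = Suc (?L - Suc i))"
    using assms ij unfolding chain_def by auto
  moreover have "(?L - Suc i = Suc (?L - Suc j) \<or> ?L - Suc j = Suc (?L - Suc i)) \<longleftrightarrow> (i = Suc j \<or> j = Suc i)"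
    using ij by auto
  ultimately show "R (rev vs ! i) (rev vs ! j) \<longleftrightarrow> (i = Suc j \<or> j = Suc i)"
    using ij by (simp add: rev_nth)
qed

lemma chain_cons:
  assumes "chain R' vs" "distinct vs" "w \<notin> set vs" "vs \<noteq> []"
    "\<And>z. R w z \<longleftrightarrow> z = hd vs" "\<And>z. R z w \<longleftrightarrow> z = hd vs"
    "\<And>y z. y \<in> set vs \<Longrightarrow> z \<in> set vs \<Longrightarrow> R y z \<longleftrightarrow> R' y z"
  shows "chain R (w # vs)"
  unfolding chain_def
proof (intro allI impI)
  fix i j assume ij: "i < length (w # vs)" "j < length (w # vs)"
  have hd0: "hd vs = vs ! 0" using assms(4) by (simp add: hd_conv_nth)
  have nw: "\<not> R w w" using assms(5)[of w] assms(3) assms(4) by auto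
  have eq0: "vs ! k = vs ! 0 \<longleftrightarrow> k = 0" if "k < length vs" for k
    using assms(2) assms(4) that by (simp add: nth_eq_iff_index_eq)
  show "R ((w # vs) ! i) ((w # vs) ! j) \<longleftrightarrow> (i = Suc j \<or> j = Suc i)"
  proof (cases i)
    case 0
    show ?thesis
    proof (cases j)
      case 0 then show ?thesis using \<open>i = 0\<close> nw by simp
    next
      case (Suc j')
      then have "j' < length vs" using ij by simp
      then show ?thesis using \<open>i = 0\<close> Suc assms(5) hd0 eq0 by auto
    qed
  next
    case (Suc i')
    have i': "i' < length vs" using ij Suc by simp
    show ?thesis
    proof (cases j)
      case 0 then show ?thesis using Suc assms(6) hd0 eq0[OF i'] by auto
    next
      case (Suc j')
      have j': "j' < length vs" using ij Suc by simp
      have "R (vs ! i') (vs ! j') \<longleftrightarrow> R' (vs ! i') (vs ! j')" using assms(7) i' j' by simp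
      then show ?thesis using assms(1) i' j' \<open>i = Suc i'\<close> Suc unfolding chain_def by auto
    qed
  qed
qed

lemma coprime_lin:
  fixes P Q :: int
  assumes "coprime P Q" shows "coprime P (k * P - Q)"
proof -
  have "gcd P (k * P + (- Q)) = gcd P (- Q)" by (rule gcd_add_mult)
  then have "gcd P (k * P - Q) = 1" using assms by (simp add: coprime_iff_gcd_eq_1)
  then show ?thesis by (simp add: coprime_iff_gcd_eq_1)
qed

lemma orient:
  assumes "distinct vs" "chain R vs" "mm (map h vs) = inv4 P Q" "0 < Q" "Q < P" "coprime P Q"
    "{hd vs, last vs} = {a, b}" "a \<noteq> b" "length vs \<ge> 2"
  shows "\<exists>vs1 P1 Q1. distinct vs1 \<and> set vs1 = set vs \<and> chain R vs1 \<and> mm (map h vs1) = inv4 P1 Q1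
     \<and> 0 < Q1 \<and> Q1 < P1 \<and> coprime P1 Q1 \<and> hd vs1 = a \<and> last vs1 = b"
proof -
  have ne: "vs \<noteq> []" using assms(9) by auto
  have "hd vs \<noteq> last vs"
  proof
    assume "hd vs = last vs"
    then have "vs ! 0 = vs ! (length vs - 1)" using ne by (simp add: hd_conv_nth last_conv_nth)
    moreover have "(vs ! 0 = vs ! (length vs - 1)) = (0 = length vs - 1)"
      by (rule nth_eq_iff_index_eq) (use assms(1) assms(9) in auto)
    ultimately have "0 = length vs - 1" by simp
    then show False using assms(9) by simp
  qed
  then consider "hd vs = a" "last vs = b" | "hd vs = b" "last vs = a" using assms(7) assms(8) by (metis doubleton_eq_iff)
  then show ?thesis
  proof cases
    case 1 then show ?thesis using assms by blast
  next
    case 2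
    have r1: "mm (map h (rev vs)) = inv4 P (P - Q)"
      using assms(3) by (simp add: rev_map[symmetric] mm_rev conjT_inv4)
    have r2: "coprime P (P - Q)" using coprime_lin[OF assms(6), of 1] by simp
    have r3: "hd (rev vs) = a" "last (rev vs) = b" using 2 ne by (simp_all add: hd_rev last_rev)
    show ?thesis
      apply (rule exI[of _ "rev vs"], rule exI[of _ P], rule exI[of _ "P - Q"])
      using assms chain_rev[OF assms(2)] r1 r2 r3 by auto
  qed
qed

context cfgl begin

lemma nrm_ge2: "v\<in>V \<Longrightarrow> dt I g v v \<ge> 2"
proof -
  assume v: "v\<in>V"
  obtain s where s: "g v s = 1 \<or> g v s = -2" using special[OF v] by blast
  have sI: "s\<in>I" using out[OF v] s by force
  have "g v s * g v s \<le> dt I g v v" unfolding dt_def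
    using finI sI by (intro member_le_sum) auto
  moreover have "g v s * g v s \<ge> 1" using s by auto
  ultimately show ?thesis using nrm1[OF v] by simp
qed

end

lemma main:
  assumes "cfgl V E I g u f"
  shows "\<exists>vs P Q. distinct vs \<and> set vs = V \<and> chain E vs \<and> mm (map (\<lambda>v. dt I g v v) vs) = inv4 P Q
    \<and> 0 < Q \<and> Q < P \<and> coprime P Q \<and> {v\<in>V. g v u \<noteq> 0} = {hd vs, last vs}"
  using assms
proof (induction "card V" arbitrary: V E I g u f rule: less_induct)
  case less
  interpret C: cfgl V E I g u f by (rule less.prems)
  show ?case
  proof (cases "card V \<ge> 3")
    case False
    then have c2: "card V = 2" using C.card_ge2 by simp
    have II: "I = {u,f}"
    proof -
      have s: "{u,f} \<subseteq> I" using C.uI C.fI by auto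
      have c: "card {u,f} = card I" using C.uf C.cardI c2 by simp
      show ?thesis using card_subset_eq[OF C.finI s c] by simp
    qed
    obtain p q where pq: "p\<in>V" "q\<in>V" "g p f = 1" "g q f = -2" "\<forall>z\<in>V. z\<noteq>p \<longrightarrow> z\<noteq>q \<longrightarrow> g z f = 0"
      using C.T5f unfolding T5_def by blast
    have pnq: "p \<noteq> q" using pq by auto
    have VV: "V = {p,q}"
    proof -
      have s: "{p,q} \<subseteq> V" using pq by auto
      have c: "card {p,q} = card V" using pnq c2 by simp
      show ?thesis using card_subset_eq[OF C.finV s c] by simp
    qed
    obtain w0 b0 where T6: "w0\<in>V" "b0\<in>V" "w0\<noteq>b0" "g w0 u = -1" "g b0 u = -1"
      using C.T6u unfolding T6_def by blast
    have pu: "g p u = -1" "g q u = -1" using T6 VV pnq by auto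
    have uf: "u \<noteq> f" by (rule C.uf)
    have dpp: "dt I g p p = 2" unfolding dt_def II using uf pu pq by simp
    have dqq: "dt I g q q = 5" unfolding dt_def II using uf pu pq by simp
    have dpq: "dt I g p q = -1" unfolding dt_def II using uf pu pq by simp
    have Epq: "E p q" using C.dtE[OF pq(1) pq(2) pnq] dpq by (auto split: if_splits)
    have Eqp: "E q p" using C.E_sym[OF Epq] .
    have ch: "chain E [p,q]" unfolding chain_def
      using Epq Eqp C.Eirr by (auto simp: less_Suc_eq)
    have r1: "mm (map (\<lambda>v. dt I g v v) [p,q]) = inv4 3 2" using dpp dqq mm_base by simp
    have r2: "coprime (3::int) 2" using coprime_add_one_left[of "2::int"] by simp
    have r3: "{v\<in>V. g v u \<noteq> 0} = {hd [p,q], last [p,q]}" using VV pu by auto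
    show ?thesis
      apply (rule exI[of _ "[p,q]"], rule exI[of _ 3], rule exI[of _ 2])
      using ch pnq VV r1 r2 r3 by auto
  next
    case True
    obtain w x a b where L: "w\<in>V" "a\<in>V" "b\<in>V" "x\<in>I" "x\<noteq>u" "x\<noteq>f" "w\<noteq>a" "w\<noteq>b" "a\<noteq>b"
      "g w x = 1" "g w u = -1" "g w f = 0" "\<forall>i. i\<noteq>x \<longrightarrow> i\<noteq>u \<longrightarrow> g w i = 0"
      "g b u = -1" "\<forall>z\<in>V. z\<noteq>w \<longrightarrow> z\<noteq>b \<longrightarrow> g z u = 0"
      "g a x = -1" "g b x = -1" "\<forall>z\<in>V. z\<noteq>w \<longrightarrow> z\<noteq>a \<longrightarrow> z\<noteq>b \<longrightarrow> g z x = 0"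
      "\<forall>z. E w z \<longleftrightarrow> z = a"
      using C.leaf[OF True] by blast
    let ?V = "V - {w}"
    let ?E = "\<lambda>v z. E v z \<and> v \<noteq> w \<and> z \<noteq> w"
    let ?I = "I - {u}"
    let ?g = "\<lambda>v i. if i = u then 0 else g v i"
    have cf: "cfgl ?V ?E ?I ?g x f" by (rule C.reduce[OF L])
    have lt: "card ?V < card V" by (rule card_Diff1_less[OF C.finV L(1)])
    obtain vs P Q where vs: "distinct vs" "set vs = ?V" "chain ?E vs" "mm (map (\<lambda>v. dt ?I ?g v v) vs) = inv4 P Q"
      "0 < Q" "Q < P" "coprime P Q" "{v\<in>?V. ?g v x \<noteq> 0} = {hd vs, last vs}"
      using less.hyps[OF lt cf] by blast
    have ends: "{v\<in>?V. ?g v x \<noteq> 0} = {a, b}" using L by auto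
    have len: "length vs \<ge> 2"
    proof -
      have "length vs = card ?V" using vs(1) vs(2) by (metis distinct_card)
      then show ?thesis using True C.finV L(1) by simp
    qed
    have hl: "{hd vs, last vs} = {a,b}" using trans[OF vs(8)[symmetric] ends] .
    obtain vs1 P1 Q1 where v1: "distinct vs1" "set vs1 = set vs" "chain ?E vs1"
      "mm (map (\<lambda>v. dt ?I ?g v v) vs1) = inv4 P1 Q1" "0 < Q1" "Q1 < P1" "coprime P1 Q1" "hd vs1 = a" "last vs1 = b"
      using orient[OF vs(1) vs(3) vs(4) vs(5) vs(6) vs(7) hl L(9) len] by blast
    note v1 = v1(1) v1(2)[unfolded vs(2)] v1(3-)
    have aset: "a \<in> set vs1" using v1(2) L(2) L(7) by simp
    have ne: "vs1 \<noteq> []" using aset by (cases vs1) auto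
    have Ew2: "\<And>z. E z w \<longleftrightarrow> z = a" using L(19) C.E_sym by blast
    have ch: "chain E (w # vs1)"
    proof (rule chain_cons[OF v1(3) v1(1)])
      show "w \<notin> set vs1" using v1(2) by simp
      show "vs1 \<noteq> []" by (rule ne)
      show "\<And>z. E w z \<longleftrightarrow> z = hd vs1" using L(19) v1(8) by simp
      show "\<And>z. E z w \<longleftrightarrow> z = hd vs1" using Ew2 v1(8) by simp
      show "\<And>y z. y \<in> set vs1 \<Longrightarrow> z \<in> set vs1 \<Longrightarrow> E y z \<longleftrightarrow> ?E y z" using v1(2) by auto
    qed
    define nr where "nr v = dt I g v v" for v
    define nr' where "nr' v = dt ?I ?g v v" for v
    have nrw: "nr w = 2" unfolding nr_def
      using C.dt_two[OF L(1) L(4) L(5) L(13), of w] L(10) L(11) by simp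
    have nrv: "nr v = nr' v" if "v \<in> ?V" "v \<noteq> b" for v
    proof -
      have "g v u = 0" using L(15) that by auto
      then show ?thesis unfolding nr_def nr'_def using C.dt_red[of v v] by simp
    qed
    have nrb: "nr b = nr' b + 1" unfolding nr_def nr'_def using C.dt_red[of b b] L(14) by simp
    define cs where "cs = map nr' vs1"
    have split: "vs1 = butlast vs1 @ [b]" using ne v1(9) by (metis append_butlast_last_id)
    have bnot: "b \<notin> set (butlast vs1)"
    proof -
      have "distinct (butlast vs1 @ [b])" using v1(1) split by simp
      then show ?thesis by simp
    qed
    have "map nr vs1 = map nr' (butlast vs1) @ [nr' b + 1]"
    proof -
      have "map nr (butlast vs1) = map nr' (butlast vs1)"
      proof (rule map_cong[OF refl])
        fix v assume "v \<in> set (butlast vs1)"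
        then have "v \<in> ?V" "v \<noteq> b" using bnot v1(2) in_set_butlastD by fastforce+
        then show "nr v = nr' v" by (rule nrv)
      qed
      then show ?thesis using split nrb by (metis map_append list.map)
    qed
    moreover have "map nr' (butlast vs1) = butlast cs" unfolding cs_def by (simp add: map_butlast)
    moreover have "nr' b = last cs" unfolding cs_def using ne v1(9) by (simp add: last_map)
    ultimately have mapnr: "map nr (w # vs1) = 2 # (butlast cs @ [last cs + 1])" using nrw by simp
    have csne: "cs \<noteq> []" unfolding cs_def using ne by simp
    have "mm (map nr (w # vs1)) = mmul (2,-1,1,0) (mm (butlast cs @ [last cs + 1]))"
      using mapnr by simp
    also have "\<dots> = mmul (2,-1,1,0) (mmul (mm (butlast cs @ [last cs])) (1,0,-1,1))"
      by (simp add: mm_snoc_inc)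
    also have "butlast cs @ [last cs] = cs" using csne by simp
    also have "mm cs = inv4 P1 Q1" unfolding cs_def nr'_def using v1(4) by simp
    also have "mmul (2,-1,1,0) (mmul (inv4 P1 Q1) (1,0,-1,1)) = inv4 (2*P1 - Q1) P1"
      by (simp add: move_R mmul_assoc[symmetric])
    finally have mmf: "mm (map (\<lambda>v. dt I g v v) (w # vs1)) = inv4 (2*P1 - Q1) P1" unfolding nr_def by simp
    have cop: "coprime (2*P1 - Q1) P1" using coprime_lin[OF v1(7), of 2] by (simp add: coprime_commute)
    have endsu0: "{v\<in>V. g v u \<noteq> 0} = {w, b}"
      using L(1) L(3) L(8) L(11) L(14) L(15) by auto
    have endsu: "{v\<in>V. g v u \<noteq> 0} = {hd (w # vs1), last (w # vs1)}"
      using endsu0 ne v1(9) by simp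
    have dist: "distinct (w # vs1)" using v1(1) v1(2) by simp
    have setv: "set (w # vs1) = V" using v1(2) L(1) by auto
    show ?thesis
      apply (rule exI[of _ "w # vs1"], rule exI[of _ "2*P1 - Q1"], rule exI[of _ P1])
      using dist setv ch mmf cop endsu v1(5) v1(6) by simp
  qed
qed

theorem theorem3p12:
  fixes V :: "'v set" and E :: "'v \<Rightarrow> 'v \<Rightarrow> bool" and d :: "'v \<Rightarrow> int"
    and \<phi> :: "'v \<Rightarrow> nat \<Rightarrow> int" and n t :: nat
  assumes tree: "is_tree V E"
    and minimal: "minimal_plumbing V d"
    and card: "card V = n"
    and emb: "symplectic_embedding n V E d \<phi>"
    and t: "t < n" "type6 V \<phi> t"
    and t_unique: "\<forall>i<n. type6 V \<phi> i \<longrightarrow> i = t"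
    and five: "\<exists>!s. s < n \<and> type5 V \<phi> s"
    and others: "\<forall>i<n. i \<noteq> t \<and> \<not> type5 V \<phi> i \<longrightarrow> type4 V \<phi> i \<or> type7 V \<phi> i"
  shows "in_G V E d \<and>
    (\<exists>p q vs. 0 < q \<and> q < p \<and> coprime p q \<and> is_Gamma_pq p q V E d vs
       \<and> {v \<in> V. \<phi> v t \<noteq> 0} = {hd vs, last vs})"
proof -
  have gr: "graph V E" and cg: "connected_graph V E" using tree unfolding is_tree_def by auto
  have finV: "finite V" using gr unfolding graph_def by auto
  obtain s where s: "s < n" "type5 V \<phi> s" and s_uni: "\<And>s'. s' < n \<Longrightarrow> type5 V \<phi> s' \<Longrightarrow> s' = s"
    using five by auto
  have e1: "\<And>v i. v\<in>V \<Longrightarrow> i \<ge> n \<Longrightarrow> \<phi> v i = 0"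
    and e2: "\<And>v1 v2. v1\<in>V \<Longrightarrow> v2\<in>V \<Longrightarrow> v1 \<noteq> v2 \<Longrightarrow> Qn n (\<phi> v1) (\<phi> v2) = (if E v1 v2 then 1 else 0)"
    and e3: "\<And>v. v\<in>V \<Longrightarrow> Qn n (\<phi> v) (\<phi> v) = d v"
    and e4: "\<And>v. v\<in>V \<Longrightarrow> Qn n (\<phi> v) (Kn n) + Qn n (\<phi> v) (\<phi> v) = -2"
    using emb unfolding symplectic_embedding_def by auto
  have Qdt: "\<And>v w. Qn n (\<phi> v) (\<phi> w) = - dt {..<n} \<phi> v w" unfolding Qn_def dt_def by simp
  have QK: "\<And>v. Qn n (\<phi> v) (Kn n) = - (\<Sum>i<n. \<phi> v i)" unfolding Qn_def Kn_def by simp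
  have ts: "t \<noteq> s"
  proof
    assume "t = s"
    have h1: "coeffs_at V \<phi> t = {#-1, -1#}" using t(2) unfolding type6_def by simp
    have h2: "coeffs_at V \<phi> s = {#1, -2#}" using s(2) unfolding type5_def by simp
    have "{#-1, -1#} = ({#1, -2#} :: int multiset)" using h1 h2 \<open>t = s\<close> by simp
    then have "count {#-1, -1#} (1::int) = count {#1, -2#} (1::int)" by (rule arg_cong)
    then show False by simp
  qed
  have cf: "cfgl V E {..<n} \<phi> t s"
  proof (unfold_locales)
    show "finite V" by (rule finV)
    show "finite {..<n}" by simp
    show "card {..<n} = card V" using card by simp
    show "\<And>v i. v \<in> V \<Longrightarrow> i \<notin> {..<n} \<Longrightarrow> \<phi> v i = 0" using e1 by auto
    show "dt {..<n} \<phi> v w = (if E v w then - 1 else 0)" if "v\<in>V" "w\<in>V" "v\<noteq>w" for v w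
      using e2[OF that] Qdt[of v w] by (auto split: if_splits)
    show "(\<Sum>i\<in>{..<n}. \<phi> v i * (\<phi> v i + 1)) = 2" if "v\<in>V" for v
    proof -
      have "- (\<Sum>i<n. \<phi> v i) - dt {..<n} \<phi> v v = -2" using e4[OF that] QK[of v] Qdt[of v v] by simp
      moreover have "(\<Sum>i\<in>{..<n}. \<phi> v i * (\<phi> v i + 1)) = (\<Sum>i<n. \<phi> v i) + dt {..<n} \<phi> v v"
        unfolding dt_def by (simp add: algebra_simps sum.distrib)
      ultimately show ?thesis by simp
    qed
    show "dt {..<n} \<phi> v v \<noteq> 1" if "v\<in>V" for v
      using minimal that e3[OF that] Qdt[of v v] unfolding minimal_plumbing_def by auto
    show "\<And>v w. E v w \<Longrightarrow> v \<in> V \<and> w \<in> V" using gr unfolding graph_def by auto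
    show "\<And>v. \<not> E v v" using gr unfolding graph_def by auto
    show "\<And>x y. x \<in> V \<Longrightarrow> y \<in> V \<Longrightarrow> E\<^sup>*\<^sup>* x y" using cg unfolding connected_graph_def by auto
    show "t \<in> {..<n}" using t by simp
    show "s \<in> {..<n}" using s by simp
    show "t \<noteq> s" by (rule ts)
    show "T6 V \<phi> t"
      using coeffs2[OF finV, of \<phi> t "-1" "-1"] t(2) unfolding type6_def T6_def by auto
    show "T5 V \<phi> s"
      using coeffs2[OF finV, of \<phi> s 1 "-2"] s(2) unfolding type5_def T5_def by auto
    show "T4 V \<phi> i \<or> T7 V \<phi> i" if "i \<in> {..<n}" "i \<noteq> t" "i \<noteq> s" for i
    proof -
      have "\<not> type5 V \<phi> i" using s_uni[of i] that by auto
      then have "type4 V \<phi> i \<or> type7 V \<phi> i" using others that by auto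
      then show ?thesis
      proof
        assume "type4 V \<phi> i"
        then have "T4 V \<phi> i"
          using coeffs2[OF finV, of \<phi> i 1 "-1"] unfolding type4_def T4_def by auto
        then show ?thesis by simp
      next
        assume "type7 V \<phi> i"
        then have "T7 V \<phi> i"
          using coeffs3[OF finV, of \<phi> i 1 "-1" "-1"] unfolding type7_def T7_def by blast
        then show ?thesis by simp
      qed
    qed
  qed
  interpret C: cfgl V E "{..<n}" \<phi> t s by (rule cf)
  obtain vs P Q where vs: "distinct vs" "set vs = V" "chain E vs" "mm (map (\<lambda>v. dt {..<n} \<phi> v v) vs) = inv4 P Q"
    "0 < Q" "Q < P" "coprime P Q" "{v\<in>V. \<phi> v t \<noteq> 0} = {hd vs, last vs}"
    using main[OF cf] by blast
  define as where "as = map (\<lambda>v. dt {..<n} \<phi> v v) vs"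
  have Vne: "V \<noteq> {}" using cg unfolding connected_graph_def by auto
  have asne: "as \<noteq> []" unfolding as_def using vs(2) Vne by auto
  have as2: "\<forall>a\<in>set as. a \<ge> 2" unfolding as_def using vs(2) C.nrm_ge2 by auto
  have "cf_val as = of_int (fst (mm as)) / of_int (fst (snd (snd (mm as))))"
    using mm_cf[OF asne as2] by blast
  then have cfv: "cf_val as = of_int (P^2) / of_int (P*Q - 1)"
    using vs(4) unfolding as_def inv4_def by simp
  have chw: "is_chain_with V E d vs as"
    unfolding is_chain_with_def
  proof (intro conjI allI impI)
    show "distinct vs" "set vs = V" by (rule vs(1), rule vs(2))
    show "length vs = length as" unfolding as_def by simp
  next
    fix i j assume "i < length vs" "j < length vs"
    then show "E (vs ! i) (vs ! j) \<longleftrightarrow> (i = Suc j \<or> j = Suc i)" using vs(3) unfolding chain_def by blast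
  next
    fix i assume i: "i < length vs"
    then have "vs ! i \<in> V" using vs(2) nth_mem by blast
    then show "d (vs ! i) = - (as ! i)" using e3 Qdt i unfolding as_def by simp
  qed
  have G: "is_Gamma_pq P Q V E d vs"
    unfolding is_Gamma_pq_def using asne as2 cfv chw by blast
  have "in_G V E d" unfolding in_G_def using G vs(5) vs(6) vs(7) by blast
  then show ?thesis using G vs(5) vs(6) vs(7) vs(8) by blast
qed


end
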